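(* Let $\Bbbk$ be a field, $R=\Bbbk[x_1,\dots,x_m]$ with the standard $\mathbb Z^m$-grading, and let $\mathcal F_\bullet$ be a $\mathbb Z^m$-graded minimal free resolution of a finitely generated $\mathbb Z^m$-graded $R$-module $M$, with differentials $f_n$ and $f_0\colon F_0\to M$ the augmentation. Let $B=\coprod_n B_n$ be a basis of $\mathcal F_\bullet$ consisting of homogeneous elements. Let $\overline{\mathcal F}_\bullet=\mathcal F_\bullet\otimes_R R/(x_1-1,\dots,x_m-1)$ (a complex of $\Bbbk$-vector spaces with differentials $\bar f_n$, and $\bar f_0\colon\overline F_0\to H_0(\overline{\mathcal F}_\bullet)$ the canonical projection), and let $\overline B$ be the basis of $\overline{\mathcal F}_\bullet$ induced by $B$. Then: (a) for each $n\ge1$ and each $\bar b\in\overline B_n$ one has $\bar f_n(\bar b)\ne0$; (b) if $\overline B$ is a basis with minimal support for $\overline{\mathcal F}_\bullet$, then $B$ is a basis with minimal support for $\mathcal F_\bullet$; (c) if $B$ is a basis with minimal support for $\mathcal F_\bullet$ and $M$ is torsion-free, then $\overline B$ is a basis with minimal support for $\overline{\mathcal F}_\bullet$.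
   Context: Let $\mathcal F_\bullet: 0\leftarrow F_0\leftarrow F_1\leftarrow\cdots\leftarrow F_l\leftarrow0$ be a complex of free modules of finite rank over a ring, with differentials $f_n\colon F_n\to F_{n-1}$, and let $f_0\colon F_0\to H_0(\mathcal F_\bullet)$ be the canonical projection. Let $B_n$ be a basis of $F_n$ and $B=\coprod B_n$. For $y=\sum_{c\in B_n}a_cc\in F_n$, its support is $\operatorname{supp}y=\{c\in B_n: a_c\neq0\}$. An element $y\in F_n$ is a cycle with minimal support (relative to $B$) if $y\in\operatorname{Ker}f_n$ and $\operatorname{supp}y$ does not properly contain the support of any nonzero element of $\operatorname{Ker}f_n$. For $y\in F_n$, $n\ge1$, the boundary support of $y$ is $\operatorname{supp}f_n(y)$. $B$ is a basis with minimal support for $\mathcal F_\bullet$ if for every $n\ge1$ and every $b\in B_n$, $f_n(b)$ is a cycle with minimal support. A $\mathbb Z^m$-graded free resolution is minimal if its differentials are homogeneous of degree $0$ and $f_n(F_n)\subseteq\mathfrak m F_{n-1}$ for $n\ge1$, where $\mathfrak m=(x_1,\dots,x_m)$. *)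

theory Defs
  imports "HOL-Library.Poly_Mapping"
begin

(* Polynomials over 'k in the variables x_0, x_1, ...: finitely supported maps
   from exponent vectors (monomials) to coefficients. *)
type_synonym 'k mpoly = "(nat \<Rightarrow>\<^sub>0 nat) \<Rightarrow>\<^sub>0 'k"

(* R = k[x_1,...,x_m]: polynomials only involving the first m variables *)
definition poly_ring :: "nat \<Rightarrow> ('k::zero) mpoly set" where
  "poly_ring m = {p. \<forall>\<alpha>\<in>Poly_Mapping.keys p. Poly_Mapping.keys (\<alpha>::nat \<Rightarrow>\<^sub>0 nat) \<subseteq> {..<m}}"

(* membership in the maximal ideal (x_1,...,x_m) of R: zero constant term *)
definition in_max_ideal :: "nat \<Rightarrow> ('k::zero) mpoly \<Rightarrow> bool" where
  "in_max_ideal m p \<longleftrightarrow> p \<in> poly_ring m \<and> Poly_Mapping.lookup p 0 = 0"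

(* p is Z^m-homogeneous of multidegree d (the zero polynomial is homogeneous of every degree) *)
definition homog_of_deg :: "(nat \<Rightarrow> int) \<Rightarrow> ('k::zero) mpoly \<Rightarrow> bool" where
  "homog_of_deg d p \<longleftrightarrow> (\<forall>\<alpha>\<in>Poly_Mapping.keys p. \<forall>i. int (Poly_Mapping.lookup \<alpha> i) = d i)"

(* the quotient map R \<rightarrow> R/(x_1 - 1,...,x_m - 1) = k, i.e. evaluation at (1,...,1) *)
definition eval_at_one :: "('k::comm_ring_1) mpoly \<Rightarrow> 'k" where
  "eval_at_one p = (\<Sum>\<alpha>\<in>Poly_Mapping.keys p. Poly_Mapping.lookup p \<alpha>)"

(* ---------- complexes of free modules of finite rank with a chosen basis ----------
   F_n is the free module with basis B n over the coefficient ring with carrier K;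
   an element of F_n is its coordinate function 'b \<Rightarrow> 'r (zero outside B n).
   The differential f_n : F_n \<rightarrow> F_(n-1), n \<ge> 1, is given by its matrix D n:
   f_n(b) = \<Sum>_{c \<in> B(n-1)} D n b c \<cdot> c. *)

definition cx_elems :: "'r set \<Rightarrow> (nat \<Rightarrow> 'b set) \<Rightarrow> nat \<Rightarrow> ('b \<Rightarrow> 'r::zero) set" where
  "cx_elems K B n = {y. (\<forall>c. c \<notin> B n \<longrightarrow> y c = 0) \<and> (\<forall>c. y c \<in> K)}"

definition cx_diff :: "(nat \<Rightarrow> 'b set) \<Rightarrow> (nat \<Rightarrow> 'b \<Rightarrow> 'b \<Rightarrow> 'r::comm_semiring_0)
    \<Rightarrow> nat \<Rightarrow> ('b \<Rightarrow> 'r) \<Rightarrow> ('b \<Rightarrow> 'r)" where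
  "cx_diff B D n y = (\<lambda>c. if c \<in> B (n - 1) then (\<Sum>b\<in>B n. y b * D n b c) else 0)"

definition cx_image :: "'r set \<Rightarrow> (nat \<Rightarrow> 'b set) \<Rightarrow> (nat \<Rightarrow> 'b \<Rightarrow> 'b \<Rightarrow> 'r::comm_semiring_0)
    \<Rightarrow> nat \<Rightarrow> ('b \<Rightarrow> 'r) set" where
  "cx_image K B D n = cx_diff B D (Suc n) ` cx_elems K B (Suc n)"

(* Ker f_n; for n = 0, f_0 is the canonical projection F_0 \<rightarrow> H_0, whose kernel is Im f_1 *)
definition cx_ker :: "'r set \<Rightarrow> (nat \<Rightarrow> 'b set) \<Rightarrow> (nat \<Rightarrow> 'b \<Rightarrow> 'b \<Rightarrow> 'r::comm_semiring_0)
    \<Rightarrow> nat \<Rightarrow> ('b \<Rightarrow> 'r) set" where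
  "cx_ker K B D n = (if n = 0 then cx_image K B D 0
                     else {y \<in> cx_elems K B n. cx_diff B D n y = (\<lambda>_. 0)})"

definition cx_supp :: "(nat \<Rightarrow> 'b set) \<Rightarrow> nat \<Rightarrow> ('b \<Rightarrow> 'r::zero) \<Rightarrow> 'b set" where
  "cx_supp B n y = {c \<in> B n. y c \<noteq> 0}"

definition cycle_min_supp :: "'r set \<Rightarrow> (nat \<Rightarrow> 'b set) \<Rightarrow> (nat \<Rightarrow> 'b \<Rightarrow> 'b \<Rightarrow> 'r::comm_semiring_0)
    \<Rightarrow> nat \<Rightarrow> ('b \<Rightarrow> 'r) \<Rightarrow> bool" where
  "cycle_min_supp K B D n y \<longleftrightarrow> y \<in> cx_ker K B D n \<and>
     \<not> (\<exists>z\<in>cx_ker K B D n. z \<noteq> (\<lambda>_. 0) \<and> cx_supp B n z \<subset> cx_supp B n y)"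

definition basis_vec :: "'b \<Rightarrow> ('b \<Rightarrow> 'r::{zero,one})" where
  "basis_vec b = (\<lambda>c. if c = b then 1 else 0)"

definition basis_min_supp :: "'r set \<Rightarrow> (nat \<Rightarrow> 'b set) \<Rightarrow> (nat \<Rightarrow> 'b \<Rightarrow> 'b \<Rightarrow> 'r::comm_semiring_1)
    \<Rightarrow> bool" where
  "basis_min_supp K B D \<longleftrightarrow>
     (\<forall>n\<ge>1. \<forall>b\<in>B n. cycle_min_supp K B D (n - 1) (cx_diff B D n (basis_vec b)))"

(* A Z^m-graded minimal free resolution F_0 \<leftarrow> F_1 \<leftarrow> ... \<leftarrow> F_l \<leftarrow> 0 over R = k[x_1..x_m]
   of M = H_0 = coker f_1, with homogeneous basis B (basis element b \<in> B n has
   multidegree deg n b \<in> Z^m, encoded as a function nat \<Rightarrow> int vanishing from m on). *)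
definition min_graded_free_res :: "nat \<Rightarrow> nat \<Rightarrow> (nat \<Rightarrow> 'b set)
    \<Rightarrow> (nat \<Rightarrow> 'b \<Rightarrow> 'b \<Rightarrow> ('k::field) mpoly) \<Rightarrow> (nat \<Rightarrow> 'b \<Rightarrow> nat \<Rightarrow> int) \<Rightarrow> bool" where
  "min_graded_free_res m l B D deg \<longleftrightarrow>
     (\<forall>n. finite (B n)) \<and> (\<forall>n>l. B n = {}) \<and>
     (\<forall>n. \<forall>b\<in>B n. \<forall>i\<ge>m. deg n b i = 0) \<and>
     (\<forall>n\<ge>1. \<forall>b\<in>B n. \<forall>c\<in>B (n - 1).
        D n b c \<in> poly_ring m \<and>
        homog_of_deg (\<lambda>i. deg n b i - deg (n - 1) c i) (D n b c) \<and>
        in_max_ideal m (D n b c)) \<and>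
     (\<forall>n\<ge>1. cx_ker (poly_ring m) B D n = cx_image (poly_ring m) B D n)"

definition coker_torsion_free :: "nat \<Rightarrow> (nat \<Rightarrow> 'b set) \<Rightarrow> (nat \<Rightarrow> 'b \<Rightarrow> 'b \<Rightarrow> ('k::field) mpoly) \<Rightarrow> bool" where
  "coker_torsion_free m B D \<longleftrightarrow>
     (\<forall>r\<in>poly_ring m. r \<noteq> 0 \<longrightarrow> (\<forall>y\<in>cx_elems (poly_ring m) B 0.
        (\<lambda>c. r * y c) \<in> cx_image (poly_ring m) B D 0 \<longrightarrow> y \<in> cx_image (poly_ring m) B D 0))"

definition bar_diff :: "(nat \<Rightarrow> 'b \<Rightarrow> 'b \<Rightarrow> ('k::field) mpoly) \<Rightarrow> nat \<Rightarrow> 'b \<Rightarrow> 'b \<Rightarrow> 'k" where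
  "bar_diff D n b c = eval_at_one (D n b c)"

end

theory Submission
  imports Defs
begin



lemma lookup_mult_single_gen:
  fixes p :: "('x::cancel_comm_monoid_add) \<Rightarrow>\<^sub>0 'a::comm_semiring_1"
  shows "Poly_Mapping.lookup (p * Poly_Mapping.single \<alpha> e) \<beta> = (\<Sum>l. (Poly_Mapping.lookup p l * e when \<beta> = l + \<alpha>))"
proof -
  have "\<And>l. (\<Sum>q. Poly_Mapping.lookup (Poly_Mapping.single \<alpha> e) q when \<beta> = l + q) = (e when \<beta> = l + \<alpha>)"
  proof -
    fix l
    have "(\<lambda>q. Poly_Mapping.lookup (Poly_Mapping.single \<alpha> e) q when \<beta> = l + q) = (\<lambda>q. ((e when \<beta> = l + q) when q = \<alpha>))"
      by (auto simp: lookup_single when_def fun_eq_iff)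
    then show "?thesis l" using Sum_any_when_equal[of "\<lambda>q. e when \<beta> = l + q" \<alpha>] by (simp only:)
  qed
  then show ?thesis by (simp add: lookup_mult mult_when)
qed

lemma lookup_mult_single1:
  fixes p :: "('x::cancel_comm_monoid_add) \<Rightarrow>\<^sub>0 'a::comm_semiring_1"
  shows "Poly_Mapping.lookup (p * Poly_Mapping.single \<alpha> e) (l + \<alpha>) = Poly_Mapping.lookup p l * e"
proof -
  have "(\<lambda>l'. (Poly_Mapping.lookup p l' * e when l + \<alpha> = l' + \<alpha>)) = (\<lambda>l'. (Poly_Mapping.lookup p l' * e when l' = l))"
    by (auto simp: fun_eq_iff when_def)
  then show ?thesis by (simp add: lookup_mult_single_gen)
qed

lemma lookup_mult_single2:
  fixes p :: "('x::cancel_comm_monoid_add) \<Rightarrow>\<^sub>0 'a::comm_semiring_1"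
  assumes "\<forall>l. \<beta> \<noteq> l + \<alpha>"
  shows "Poly_Mapping.lookup (p * Poly_Mapping.single \<alpha> e) \<beta> = 0"
  using assms by (simp add: lookup_mult_single_gen)




definition good :: "(nat \<Rightarrow> int) \<Rightarrow> bool" where
  "good d \<longleftrightarrow> (\<forall>i. 0 \<le> d i) \<and> finite {i. d i \<noteq> 0}"

definition mexp :: "(nat \<Rightarrow> int) \<Rightarrow> (nat \<Rightarrow>\<^sub>0 nat)" where
  "mexp d = Abs_poly_mapping (\<lambda>i. nat (d i))"

lemma lookup_mexp: "finite {i. d i \<noteq> 0} \<Longrightarrow> Poly_Mapping.lookup (mexp d) i = nat (d i)"
  unfolding mexp_def
  by (subst lookup_Abs_poly_mapping) (auto elim: finite_subset[rotated])

lemma int_lookup_mexp: "good d \<Longrightarrow> int (Poly_Mapping.lookup (mexp d) i) = d i"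
  by (simp add: good_def lookup_mexp)

lemma mexp_eq: "good d \<Longrightarrow> (\<forall>i. int (Poly_Mapping.lookup \<alpha> i) = d i) \<Longrightarrow> mexp d = \<alpha>"
  by (rule poly_mapping_eqI) (metis int_lookup_mexp of_nat_eq_iff)

lemma good_of_exp: "(\<forall>i. int (Poly_Mapping.lookup \<alpha> i) = d i) \<Longrightarrow> good d"
proof -
  assume a: "\<forall>i. int (Poly_Mapping.lookup \<alpha> i) = d i"
  have a': "\<And>i. d i = int (Poly_Mapping.lookup \<alpha> i)" using a by simp
  have "{i. d i \<noteq> 0} = Poly_Mapping.keys \<alpha>"
    by (auto simp: in_keys_iff a')
  then show ?thesis using a unfolding good_def by (metis finite_keys of_nat_0_le_iff)
qed

lemma eval_single: "eval_at_one (Poly_Mapping.single \<alpha> (e::'k::comm_ring_1)) = e"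
  by (cases "e = 0") (auto simp: eval_at_one_def)

lemma eval_zero: "eval_at_one (0::'k::comm_ring_1 mpoly) = 0"
  by (simp add: eval_at_one_def)

lemma homogD:
  fixes p :: "'k::comm_ring_1 mpoly"
  assumes "homog_of_deg d p" "p \<noteq> 0"
  shows "\<exists>\<alpha>. (\<forall>i. int (Poly_Mapping.lookup \<alpha> i) = d i) \<and> p = Poly_Mapping.single \<alpha> (eval_at_one p)
           \<and> eval_at_one p \<noteq> 0"
proof -
  obtain \<alpha> where a: "\<alpha> \<in> Poly_Mapping.keys p" using assms(2)
    by (metis all_not_in_conv keys_eq_empty)
  have d: "\<forall>i. int (Poly_Mapping.lookup \<alpha> i) = d i" using assms(1) a by (simp add: homog_of_deg_def)
  have k: "Poly_Mapping.keys p = {\<alpha>}"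
  proof
    show "Poly_Mapping.keys p \<subseteq> {\<alpha>}"
    proof
      fix \<beta> assume "\<beta> \<in> Poly_Mapping.keys p"
      then have "\<forall>i. int (Poly_Mapping.lookup \<beta> i) = d i" using assms(1) by (simp add: homog_of_deg_def)
      then have "\<beta> = \<alpha>" using d by (intro poly_mapping_eqI) (metis of_nat_eq_iff)
      then show "\<beta> \<in> {\<alpha>}" by simp
    qed
  qed (use a in simp)
  have e: "eval_at_one p = Poly_Mapping.lookup p \<alpha>" by (simp add: eval_at_one_def k)
  have "p = Poly_Mapping.single \<alpha> (eval_at_one p)"
    by (rule poly_mapping_eqI) (metis e k in_keys_iff lookup_single_eq lookup_single_not_eq singletonD)
  moreover have "eval_at_one p \<noteq> 0" using a e by (simp add: in_keys_iff)
  ultimately show ?thesis using d by blast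
qed

lemma homog_eval_zero:
  fixes p :: "'k::comm_ring_1 mpoly"
  assumes "homog_of_deg d p"
  shows "eval_at_one p = 0 \<longleftrightarrow> p = 0"
  using homogD[OF assms] eval_zero by metis




lemma single_sum: "Poly_Mapping.single k (sum f S) = (\<Sum>x\<in>S. Poly_Mapping.single k (f x))"
  by (induction S rule: infinite_finite_induct) (simp_all add: single_add)

lemma basis_vec_diff:
  fixes E :: "nat \<Rightarrow> 'b \<Rightarrow> 'b \<Rightarrow> 'r::comm_semiring_1"
  assumes "finite (B n)" "b \<in> B n"
  shows "cx_diff B E n (basis_vec b) = (\<lambda>c. if c \<in> B (n - 1) then E n b c else 0)"
proof -
  have h: "\<And>c. (\<Sum>b'\<in>B n. basis_vec b b' * E n b' c) = E n b c"
  proof -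
    fix c
    have "(\<Sum>b'\<in>B n. basis_vec b b' * E n b' c) = (\<Sum>b'\<in>B n. if b' = b then E n b' c else 0)"
      by (rule sum.cong) (auto simp: basis_vec_def)
    then show "(\<Sum>b'\<in>B n. basis_vec b b' * E n b' c) = E n b c" using assms by simp
  qed
  show ?thesis unfolding cx_diff_def h ..
qed

context
  fixes m l :: nat
    and B :: "nat \<Rightarrow> 'b set"
    and D :: "nat \<Rightarrow> 'b \<Rightarrow> 'b \<Rightarrow> ('k::field) mpoly"
    and deg :: "nat \<Rightarrow> 'b \<Rightarrow> nat \<Rightarrow> int"
  assumes res: "min_graded_free_res m l B D deg"
begin

lemma R1: "finite (B n)" using res by (simp add: min_graded_free_res_def)
lemma R2: "l < n \<Longrightarrow> B n = {}" using res by (simp add: min_graded_free_res_def)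
lemma R3: "b \<in> B n \<Longrightarrow> m \<le> i \<Longrightarrow> deg n b i = 0" using res by (simp add: min_graded_free_res_def)
lemma R4: "1 \<le> n \<Longrightarrow> b \<in> B n \<Longrightarrow> c \<in> B (n - 1) \<Longrightarrow>
        D n b c \<in> poly_ring m \<and>
        homog_of_deg (\<lambda>i. deg n b i - deg (n - 1) c i) (D n b c) \<and>
        in_max_ideal m (D n b c)" using res by (simp add: min_graded_free_res_def)
lemma R5: "1 \<le> n \<Longrightarrow> cx_ker (poly_ring m) B D n = cx_image (poly_ring m) B D n"
  using res by (simp add: min_graded_free_res_def)

lemma Dform: "1 \<le> n \<Longrightarrow> b \<in> B n \<Longrightarrow> c \<in> B (n - 1) \<Longrightarrow> D n b c \<noteq> 0 \<Longrightarrow>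
  \<exists>\<alpha>. (\<forall>i. int (Poly_Mapping.lookup \<alpha> i) = deg n b i - deg (n - 1) c i) \<and>
     D n b c = Poly_Mapping.single \<alpha> (bar_diff D n b c) \<and> bar_diff D n b c \<noteq> 0"
  using homogD[of _ "D n b c"] R4 unfolding bar_diff_def by blast

lemma D_bar_zero: "1 \<le> n \<Longrightarrow> b \<in> B n \<Longrightarrow> c \<in> B (n - 1) \<Longrightarrow> bar_diff D n b c = 0 \<longleftrightarrow> D n b c = 0"
  using homog_eval_zero R4 unfolding bar_diff_def by blast

definition NN :: "nat \<Rightarrow> int" where
  "NN i = (\<Sum>n\<le>l. \<Sum>b\<in>B n. \<bar>deg n b i\<bar>)"

definition gam :: "nat \<Rightarrow> 'b \<Rightarrow> nat \<Rightarrow>\<^sub>0 nat" where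
  "gam n b = mexp (\<lambda>i. NN i - deg n b i)"

lemma good_gam: "b \<in> B n \<Longrightarrow> good (\<lambda>i. NN i - deg n b i)"
proof -
  assume b: "b \<in> B n"
  then have nl: "n \<le> l" using R2 by (metis empty_iff not_le)
  have "\<And>i. deg n b i \<le> NN i"
  proof -
    fix i
    have "deg n b i \<le> \<bar>deg n b i\<bar>" by simp
    also have "\<dots> \<le> (\<Sum>b\<in>B n. \<bar>deg n b i\<bar>)"
      using b R1 by (intro member_le_sum) auto
    also have "\<dots> \<le> NN i" unfolding NN_def using nl
      by (intro member_le_sum[of n "{..l}" "\<lambda>n. \<Sum>b\<in>B n. \<bar>deg n b i\<bar>"]) (auto intro: sum_nonneg)
    finally show "deg n b i \<le> NN i" .
  qed
  moreover have "{i. NN i - deg n b i \<noteq> 0} \<subseteq> {..<m}"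
  proof
    fix i assume "i \<in> {i. NN i - deg n b i \<noteq> 0}"
    moreover have "m \<le> i \<Longrightarrow> NN i = 0" unfolding NN_def using R3 by simp
    ultimately show "i \<in> {..<m}" using R3[OF b, of i] by (cases "m \<le> i") auto
  qed
  ultimately show ?thesis unfolding good_def by (auto elim: finite_subset)
qed

lemma gam_small: "b \<in> B n \<Longrightarrow> Poly_Mapping.keys (gam n b) \<subseteq> {..<m}"
proof
  fix i assume b: "b \<in> B n" and i: "i \<in> Poly_Mapping.keys (gam n b)"
  have "m \<le> i \<Longrightarrow> NN i = 0" unfolding NN_def using R3 by simp
  then show "i \<in> {..<m}" using i b R3[OF b] good_gam[OF b]
    by (cases "m \<le> i") (auto simp: gam_def in_keys_iff lookup_mexp good_def)
qed

definition lift :: "nat \<Rightarrow> ('b \<Rightarrow> 'k) \<Rightarrow> ('b \<Rightarrow> 'k mpoly)" where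
  "lift n v = (\<lambda>b. Poly_Mapping.single (gam n b) (v b))"

lemma lift_term:
  assumes n: "1 \<le> n" and b: "b \<in> B n" and c: "c \<in> B (n - 1)"
  shows "Poly_Mapping.single (gam n b) x * D n b c = Poly_Mapping.single (gam (n - 1) c) (x * bar_diff D n b c)"
proof (cases "D n b c = 0")
  case True
  then show ?thesis using D_bar_zero[OF n b c] by simp
next
  case False
  obtain \<alpha> where a: "\<forall>i. int (Poly_Mapping.lookup \<alpha> i) = deg n b i - deg (n - 1) c i"
     and De: "D n b c = Poly_Mapping.single \<alpha> (bar_diff D n b c)"
    using Dform[OF n b c False] by blast
  have "gam n b + \<alpha> = gam (n - 1) c"
    unfolding gam_def[of "n - 1"]
    by (rule sym, rule mexp_eq[OF good_gam[OF c]])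
       (simp add: lookup_add a gam_def int_lookup_mexp[OF good_gam[OF b]])
  then show ?thesis by (subst De) (simp add: mult_single)
qed

lemma lift_diff:
  assumes n: "1 \<le> n"
  shows "cx_diff B D n (lift n v) = lift (n - 1) (cx_diff B (bar_diff D) n v)"
proof
  fix c
  show "cx_diff B D n (lift n v) c = lift (n - 1) (cx_diff B (bar_diff D) n v) c"
  proof (cases "c \<in> B (n - 1)")
    case True
    have "(\<Sum>b\<in>B n. lift n v b * D n b c) = (\<Sum>b\<in>B n. Poly_Mapping.single (gam (n - 1) c) (v b * bar_diff D n b c))"
      by (rule sum.cong) (auto simp: lift_def lift_term[OF n _ True])
    then show ?thesis using True by (simp add: cx_diff_def lift_def single_sum)
  next
    case False
    then show ?thesis by (simp add: cx_diff_def lift_def)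
  qed
qed

lemma lift_zero_iff: "lift n v b = 0 \<longleftrightarrow> v b = 0"
  by (simp add: lift_def) (metis lookup_single_eq single_zero)

lemma lift_supp: "cx_supp B n (lift n v) = cx_supp B n v"
  by (simp add: cx_supp_def lift_zero_iff)

lemma lift_eq_zero: "lift n v = (\<lambda>_. 0) \<longleftrightarrow> v = (\<lambda>_. 0)"
  by (auto simp: fun_eq_iff lift_zero_iff)

lemma lift_elems: "v \<in> cx_elems UNIV B n \<Longrightarrow> lift n v \<in> cx_elems (poly_ring m) B n"
proof -
  assume v: "v \<in> cx_elems UNIV B n"
  have "\<And>c. lift n v c \<in> poly_ring m"
  proof -
    fix c
    show "lift n v c \<in> poly_ring m"
    proof (cases "c \<in> B n")
      case True
      then show ?thesis using gam_small[OF True]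
        by (auto simp: lift_def poly_ring_def)
    next
      case False
      then show ?thesis using v by (simp add: lift_def cx_elems_def poly_ring_def)
    qed
  qed
  then show ?thesis using v by (simp add: cx_elems_def lift_def)
qed


definition ext :: "(nat \<Rightarrow> int) \<Rightarrow> nat \<Rightarrow> ('b \<Rightarrow> 'k mpoly) \<Rightarrow> ('b \<Rightarrow> 'k)" where
  "ext t k y = (\<lambda>c. if good (\<lambda>i. t i - deg k c i)
       then Poly_Mapping.lookup (y c) (mexp (\<lambda>i. t i - deg k c i)) else 0)"

lemma fin_shift:
  assumes "finite {i. t i \<noteq> 0}" "b \<in> B k"
  shows "finite {i. t i - deg k b i \<noteq> 0}"
proof -
  have "{i. t i - deg k b i \<noteq> 0} \<subseteq> {i. t i \<noteq> 0} \<union> {..<m}"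
    using R3[OF assms(2)] by (auto simp: not_less)
  then show ?thesis using assms(1) by (auto elim: finite_subset)
qed

lemma ext_term:
  assumes t: "finite {i. t i \<noteq> 0}" and k: "1 \<le> k" and b: "b \<in> B k" and c: "c \<in> B (k - 1)"
  shows "(if good (\<lambda>i. t i - deg (k - 1) c i)
           then Poly_Mapping.lookup (p * D k b c) (mexp (\<lambda>i. t i - deg (k - 1) c i)) else 0)
       = (if good (\<lambda>i. t i - deg k b i) then Poly_Mapping.lookup p (mexp (\<lambda>i. t i - deg k b i)) else 0)
         * bar_diff D k b c"
proof (cases "D k b c = 0")
  case True
  then show ?thesis using D_bar_zero[OF k b c] by simp
next
  case False
  obtain \<alpha> where a: "\<forall>i. int (Poly_Mapping.lookup \<alpha> i) = deg k b i - deg (k - 1) c i"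
     and De: "D k b c = Poly_Mapping.single \<alpha> (bar_diff D k b c)"
    using Dform[OF k b c False] by blast
  show ?thesis
  proof (cases "good (\<lambda>i. t i - deg k b i)")
    case True
    have gc: "good (\<lambda>i. t i - deg (k - 1) c i)"
    proof -
      have "\<And>i. 0 \<le> t i - deg (k - 1) c i"
      proof -
        fix i
        have "0 \<le> t i - deg k b i" using True by (simp add: good_def)
        moreover have "0 \<le> deg k b i - deg (k - 1) c i" using a[rule_format, of i] by linarith
        ultimately show "0 \<le> t i - deg (k - 1) c i" by linarith
      qed
      then show ?thesis using fin_shift[OF t c] by (simp add: good_def)
    qed
    have "mexp (\<lambda>i. t i - deg (k - 1) c i) = mexp (\<lambda>i. t i - deg k b i) + \<alpha>"
      by (rule mexp_eq[OF gc]) (simp add: lookup_add a int_lookup_mexp[OF True])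
    then show ?thesis using True gc by (simp add: De lookup_mult_single1)
  next
    case False
    have "Poly_Mapping.lookup (p * D k b c) (mexp (\<lambda>i. t i - deg (k - 1) c i)) = 0"
      if gc: "good (\<lambda>i. t i - deg (k - 1) c i)"
    proof (unfold De, rule lookup_mult_single2, rule allI, rule notI)
      fix l assume e: "mexp (\<lambda>i. t i - deg (k - 1) c i) = l + \<alpha>"
      have "\<forall>i. int (Poly_Mapping.lookup l i) = t i - deg k b i"
      proof
        fix i
        have "int (Poly_Mapping.lookup (l + \<alpha>) i) = t i - deg (k - 1) c i"
          unfolding e[symmetric] by (rule int_lookup_mexp[OF gc])
        then show "int (Poly_Mapping.lookup l i) = t i - deg k b i"
          using a[rule_format, of i] by (simp add: lookup_add)
      qed
      then have "good (\<lambda>i. t i - deg k b i)" by (rule good_of_exp)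
      then show False using False by simp
    qed
    then show ?thesis using False by simp
  qed
qed

lemma ext_diff:
  assumes t: "finite {i. t i \<noteq> 0}" and k: "1 \<le> k"
  shows "ext t (k - 1) (cx_diff B D k y) = cx_diff B (bar_diff D) k (ext t k y)"
proof
  fix c
  show "ext t (k - 1) (cx_diff B D k y) c = cx_diff B (bar_diff D) k (ext t k y) c"
  proof (cases "c \<in> B (k - 1)")
    case True
    have "ext t (k - 1) (cx_diff B D k y) c =
       (\<Sum>b\<in>B k. (if good (\<lambda>i. t i - deg (k - 1) c i)
           then Poly_Mapping.lookup (y b * D k b c) (mexp (\<lambda>i. t i - deg (k - 1) c i)) else 0))"
      using True by (cases "good (\<lambda>i. t i - deg (k - 1) c i)") (simp_all add: ext_def cx_diff_def lookup_sum)
    also have "\<dots> = (\<Sum>b\<in>B k. ext t k y b * bar_diff D k b c)"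
      by (rule sum.cong[OF refl], unfold ext_def, rule ext_term[OF t k _ True], assumption)
    finally show ?thesis using True by (simp add: cx_diff_def)
  next
    case False
    then show ?thesis by (simp add: cx_diff_def ext_def)
  qed
qed

lemma ext_zero: "y c = 0 \<Longrightarrow> ext t k y c = 0"
  by (simp add: ext_def)


lemma bv_elems: "b \<in> B n \<Longrightarrow> basis_vec b \<in> cx_elems UNIV B n"
  by (simp add: cx_elems_def basis_vec_def)

lemma one_poly: "(1::'k mpoly) \<in> poly_ring m" and zero_poly: "(0::'k mpoly) \<in> poly_ring m"
  by (simp_all add: poly_ring_def)

lemma bv_elems_poly: "b \<in> B n \<Longrightarrow> basis_vec b \<in> cx_elems (poly_ring m) B n"
  by (auto simp: cx_elems_def basis_vec_def poly_ring_def)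

lemma diff_in_ker: "1 \<le> n \<Longrightarrow> y \<in> cx_elems (poly_ring m) B n \<Longrightarrow> cx_diff B D n y \<in> cx_ker (poly_ring m) B D (n - 1)"
proof -
  assume n: "1 \<le> n" and y: "y \<in> cx_elems (poly_ring m) B n"
  have "cx_diff B D n y \<in> cx_image (poly_ring m) B D (n - 1)"
    using y n by (simp add: cx_image_def)
  then show ?thesis using R5[of "n - 1"] by (cases "n - 1 = 0") (auto simp: cx_ker_def)
qed

lemma ker_zero_outside: "z \<in> cx_ker K B E k \<Longrightarrow> c \<notin> B k \<Longrightarrow> z c = 0"
  by (cases "k = 0") (auto simp: cx_ker_def cx_image_def cx_diff_def cx_elems_def)

lemma supp_eq:
  assumes n: "1 \<le> n" and b: "b \<in> B n"
  shows "cx_supp B (n - 1) (cx_diff B D n (basis_vec b)) = cx_supp B (n - 1) (cx_diff B (bar_diff D) n (basis_vec b))"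
  using D_bar_zero[OF n b] by (auto simp: cx_supp_def basis_vec_diff[where B=B and n=n, OF R1[of n] b])

lemma add_zero_poly: "(x::nat \<Rightarrow>\<^sub>0 nat) + y = 0 \<Longrightarrow> y = 0"
  by (metis add_is_0 lookup_add lookup_zero poly_mapping_eqI)

lemma partA:
  assumes n: "1 \<le> n" and b: "b \<in> B n"
  shows "cx_diff B (bar_diff D) n (basis_vec b) \<noteq> (\<lambda>_. 0)"
proof
  assume h: "cx_diff B (bar_diff D) n (basis_vec b) = (\<lambda>_. 0)"
  have "\<And>c. c \<in> B (n - 1) \<Longrightarrow> D n b c = 0"
  proof -
    fix c assume c: "c \<in> B (n - 1)"
    have "bar_diff D n b c = 0" using fun_cong[OF h, of c] c by (simp add: basis_vec_diff[where B=B and n=n, OF R1[of n] b])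
    then show "D n b c = 0" using D_bar_zero[OF n b c] by simp
  qed
  then have "cx_diff B D n (basis_vec b) = (\<lambda>_. 0)" by (auto simp: basis_vec_diff[where B=B and n=n, OF R1[of n] b])
  then have "basis_vec b \<in> cx_ker (poly_ring m) B D n" using n bv_elems_poly[OF b] by (simp add: cx_ker_def)
  then have "basis_vec b \<in> cx_image (poly_ring m) B D n" using R5[OF n] by simp
  then obtain w where w: "w \<in> cx_elems (poly_ring m) B (Suc n)" and e: "basis_vec b = cx_diff B D (Suc n) w"
    by (auto simp: cx_image_def)
  have "1 = (\<Sum>b'\<in>B (Suc n). w b' * D (Suc n) b' b)"
    using fun_cong[OF e, of b] b by (simp add: cx_diff_def basis_vec_def)
  then have "Poly_Mapping.lookup (1::'k mpoly) 0 = (\<Sum>b'\<in>B (Suc n). Poly_Mapping.lookup (w b' * D (Suc n) b' b) 0)"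
    by (subst lookup_sum[symmetric]) simp
  also have "\<dots> = 0"
  proof (rule sum.neutral, rule ballI)
    fix b' assume b': "b' \<in> B (Suc n)"
    have sn: "1 \<le> Suc n" and bb: "b \<in> B (Suc n - 1)" using b by auto
    show "Poly_Mapping.lookup (w b' * D (Suc n) b' b) 0 = 0"
    proof (cases "D (Suc n) b' b = 0")
      case True then show ?thesis by simp
    next
      case False
      obtain \<alpha> where De: "D (Suc n) b' b = Poly_Mapping.single \<alpha> (bar_diff D (Suc n) b' b)"
         and nz: "bar_diff D (Suc n) b' b \<noteq> 0"
        using Dform[OF sn b' bb False] by blast
      have "Poly_Mapping.lookup (D (Suc n) b' b) 0 = 0" using R4[OF sn b' bb] by (simp add: in_max_ideal_def)
      then have "\<alpha> \<noteq> 0" using nz De by (metis lookup_single_eq)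
      then show ?thesis unfolding De by (intro lookup_mult_single2) (metis add_zero_poly)
    qed
  qed
  finally show False by simp
qed

lemma partB:
  assumes n: "1 \<le> n" and b: "b \<in> B n"
    and bar: "cycle_min_supp UNIV B (bar_diff D) (n - 1) (cx_diff B (bar_diff D) n (basis_vec b))"
  shows "cycle_min_supp (poly_ring m) B D (n - 1) (cx_diff B D n (basis_vec b))"
  unfolding cycle_min_supp_def
proof (intro conjI notI)
  show "cx_diff B D n (basis_vec b) \<in> cx_ker (poly_ring m) B D (n - 1)"
    by (rule diff_in_ker[OF n bv_elems_poly[OF b]])
  assume "\<exists>z\<in>cx_ker (poly_ring m) B D (n - 1). z \<noteq> (\<lambda>_. 0) \<and> cx_supp B (n - 1) z \<subset> cx_supp B (n - 1) (cx_diff B D n (basis_vec b))"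
  then obtain z where z: "z \<in> cx_ker (poly_ring m) B D (n - 1)" and nz: "z \<noteq> (\<lambda>_. 0)"
    and sub: "cx_supp B (n - 1) z \<subset> cx_supp B (n - 1) (cx_diff B (bar_diff D) n (basis_vec b))"
    using supp_eq[OF n b] by auto
  obtain c0 where c0: "z c0 \<noteq> 0" using nz by auto
  then have c0B: "c0 \<in> B (n - 1)" using ker_zero_outside[OF z] by blast
  obtain \<alpha>0 where a0: "\<alpha>0 \<in> Poly_Mapping.keys (z c0)" using c0 by (metis all_not_in_conv keys_eq_empty)
  define t where "t = (\<lambda>i. int (Poly_Mapping.lookup \<alpha>0 i) + deg (n - 1) c0 i)"
  have tfin: "finite {i. t i \<noteq> 0}"
  proof -
    have "{i. t i \<noteq> 0} \<subseteq> Poly_Mapping.keys \<alpha>0 \<union> {..<m}"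
      using R3[OF c0B] by (auto simp: t_def in_keys_iff) (meson not_le)
    then show ?thesis by (auto elim: finite_subset)
  qed
  define z' where "z' = ext t (n - 1) z"
  have ex: "\<forall>i. int (Poly_Mapping.lookup \<alpha>0 i) = t i - deg (n - 1) c0 i" by (simp add: t_def)
  have "z' c0 = Poly_Mapping.lookup (z c0) \<alpha>0"
    using good_of_exp[OF ex] mexp_eq[OF good_of_exp[OF ex] ex] by (simp add: z'_def ext_def)
  then have z'nz: "z' \<noteq> (\<lambda>_. 0)" using a0 by (metis in_keys_iff)
  have "cx_supp B (n - 1) z' \<subseteq> cx_supp B (n - 1) z"
    by (auto simp: cx_supp_def z'_def ext_zero)
  then have sub': "cx_supp B (n - 1) z' \<subset> cx_supp B (n - 1) (cx_diff B (bar_diff D) n (basis_vec b))"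
    using sub by blast
  have "z' \<in> cx_ker UNIV B (bar_diff D) (n - 1)"
  proof (cases "n - 1 = 0")
    case True
    then have n1: "n = 1" using n by simp
    from z True obtain w where w: "w \<in> cx_elems (poly_ring m) B (Suc 0)" and zw: "z = cx_diff B D (Suc 0) w"
      by (auto simp: cx_ker_def cx_image_def)
    have "z' = cx_diff B (bar_diff D) 1 (ext t 1 w)"
      using ext_diff[OF tfin, of 1 w] by (simp add: z'_def zw n1)
    moreover have "ext t 1 w \<in> cx_elems UNIV B (Suc 0)"
      using w by (auto simp: cx_elems_def ext_zero)
    ultimately show ?thesis using True by (auto simp: cx_ker_def cx_image_def)
  next
    case False
    then have k: "1 \<le> n - 1" by simp
    have zk: "z \<in> cx_elems (poly_ring m) B (n - 1)" "cx_diff B D (n - 1) z = (\<lambda>_. 0)"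
      using z False by (auto simp: cx_ker_def)
    have "cx_diff B (bar_diff D) (n - 1) z' = ext t (n - 1 - 1) (cx_diff B D (n - 1) z)"
      using ext_diff[OF tfin k, of z] by (simp add: z'_def)
    also have "\<dots> = (\<lambda>_. 0)" using zk(2) by (simp add: ext_def fun_eq_iff)
    finally show ?thesis using False zk(1) by (auto simp: cx_ker_def cx_elems_def z'_def ext_zero)
  qed
  then show False using bar z'nz sub' unfolding cycle_min_supp_def by blast
qed

lemma partC:
  assumes n: "1 \<le> n" and b: "b \<in> B n"
    and pol: "cycle_min_supp (poly_ring m) B D (n - 1) (cx_diff B D n (basis_vec b))"
  shows "cycle_min_supp UNIV B (bar_diff D) (n - 1) (cx_diff B (bar_diff D) n (basis_vec b))"
  unfolding cycle_min_supp_def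
proof (intro conjI notI)
  show "cx_diff B (bar_diff D) n (basis_vec b) \<in> cx_ker UNIV B (bar_diff D) (n - 1)"
  proof (cases "n - 1 = 0")
    case True
    then have "n = Suc 0" using n by simp
    then show ?thesis using bv_elems[OF b] True by (auto simp: cx_ker_def cx_image_def)
  next
    case False
    then have k: "1 \<le> n - 1" by simp
    let ?v = "cx_diff B (bar_diff D) n (basis_vec b)"
    have "lift (n - 1 - 1) (cx_diff B (bar_diff D) (n - 1) ?v) = cx_diff B D (n - 1) (lift (n - 1) ?v)"
      by (rule lift_diff[OF k, symmetric])
    also have "\<dots> = cx_diff B D (n - 1) (cx_diff B D n (lift n (basis_vec b)))"
      by (simp add: lift_diff[OF n])
    also have "\<dots> = (\<lambda>_. 0)"
      using diff_in_ker[OF n lift_elems[OF bv_elems[OF b]]] False by (simp add: cx_ker_def)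
    finally have "cx_diff B (bar_diff D) (n - 1) ?v = (\<lambda>_. 0)" by (simp add: lift_eq_zero)
    then show ?thesis using False by (simp add: cx_ker_def cx_elems_def cx_diff_def)
  qed
  assume "\<exists>z\<in>cx_ker UNIV B (bar_diff D) (n - 1). z \<noteq> (\<lambda>_. 0) \<and> cx_supp B (n - 1) z \<subset> cx_supp B (n - 1) (cx_diff B (bar_diff D) n (basis_vec b))"
  then obtain z where z: "z \<in> cx_ker UNIV B (bar_diff D) (n - 1)" and nz: "z \<noteq> (\<lambda>_. 0)"
    and sub: "cx_supp B (n - 1) z \<subset> cx_supp B (n - 1) (cx_diff B D n (basis_vec b))"
    using supp_eq[OF n b] by auto
  have "lift (n - 1) z \<in> cx_ker (poly_ring m) B D (n - 1)"
  proof (cases "n - 1 = 0")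
    case True
    from z True obtain w where w: "w \<in> cx_elems UNIV B (Suc 0)" and zw: "z = cx_diff B (bar_diff D) (Suc 0) w"
      by (auto simp: cx_ker_def cx_image_def)
    have "lift (n - 1) z = cx_diff B D 1 (lift 1 w)"
      using lift_diff[of 1 w] True by (simp add: zw)
    then show ?thesis using True lift_elems[OF w] by (auto simp: cx_ker_def cx_image_def)
  next
    case False
    then have k: "1 \<le> n - 1" by simp
    have zk: "z \<in> cx_elems UNIV B (n - 1)" "cx_diff B (bar_diff D) (n - 1) z = (\<lambda>_. 0)"
      using z False by (auto simp: cx_ker_def)
    have "cx_diff B D (n - 1) (lift (n - 1) z) = lift (n - 1 - 1) (\<lambda>_. 0)"
      using lift_diff[OF k, of z] zk(2) by simp
    also have "\<dots> = (\<lambda>_. 0)" by (simp add: lift_def)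
    finally show ?thesis using False lift_elems[OF zk(1)] by (simp add: cx_ker_def)
  qed
  moreover have "lift (n - 1) z \<noteq> (\<lambda>_. 0)" using nz lift_eq_zero by blast
  moreover have "cx_supp B (n - 1) (lift (n - 1) z) \<subset> cx_supp B (n - 1) (cx_diff B D n (basis_vec b))"
    using sub by (simp add: lift_supp)
  ultimately show False using pol unfolding cycle_min_supp_def by blast
qed

end

theorem mainTheorem4:
  fixes m l :: nat
    and B :: "nat \<Rightarrow> 'b set"
    and D :: "nat \<Rightarrow> 'b \<Rightarrow> 'b \<Rightarrow> ('k::field) mpoly"
    and deg :: "nat \<Rightarrow> 'b \<Rightarrow> nat \<Rightarrow> int"
  assumes res: "min_graded_free_res m l B D deg"
  shows "(\<forall>n\<ge>1. \<forall>b\<in>B n. cx_diff B (bar_diff D) n (basis_vec b) \<noteq> (\<lambda>_. 0))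
       \<and> (basis_min_supp UNIV B (bar_diff D) \<longrightarrow> basis_min_supp (poly_ring m) B D)
       \<and> (basis_min_supp (poly_ring m) B D \<and> coker_torsion_free m B D
            \<longrightarrow> basis_min_supp UNIV B (bar_diff D))"
  using partA[OF res] partB[OF res] partC[OF res] unfolding basis_min_supp_def by blast



end
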